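(* For any given natural number $m$, the Goodstein sequence $G(m)$ converges (i.e. reaches $0$ after finitely many terms) if and only if it is bounded, i.e. there is a natural number $B$ with $G(n,m)\le B$ for all terms $G(n,m)$ of $G(m)$.
   Context: For a natural number base $b>1$, the hereditary representation $m\langle b\rangle$ of a natural number $m$ is its expression as $\sum_{i=0}^{l} a_i b^{i}$ with $0\le a_i<b$, $a_l\neq 0$, where every exponent is itself written in hereditary representation in base $b$, recursively. The partial Goodstein operation sends $m$ (in base $b$) to $m\langle b\rangle''$, obtained by syntactically replacing every occurrence of $b$ by $b+1$ in $m\langle b\rangle$. The Goodstein sequence $G(m)$ of $m$ is $\{m,\ m''-1,\ (m''-1)''-1,\ \dots\}$, starting from the hereditary representation of $m$ in base $2$; its $n$-th term is $G(n,m)$, with $G(1,m)=m$ in base $2$, $G(k,m)$ written in base $k+1$, and $G(k+1,m)=G(k,m)\langle k+1\rangle''-1$; the sequence stops once a term equals $0$. *)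

theory Defs
  imports Main
begin

text \<open>Hereditary base bump: m written in hereditary base b, every occurrence of b
replaced by b+1. Writing m = sum_i a_i b^i (digits a_i = m div b^i mod b; all digits
with i \<ge> m vanish), we get bump b m = sum_i a_i (b+1)^(bump b i), exponents bumped
recursively.\<close>

function bump :: "nat \<Rightarrow> nat \<Rightarrow> nat" where
  "bump b m = (if b < 2 then m
               else (\<Sum>i<m. (m div b ^ i mod b) * (b + 1) ^ bump b i))"
  by pat_completeness auto
termination
  by (relation "measure (\<lambda>(b, m). m)") simp_all

declare bump.simps [simp del]

text \<open>Goodstein sequence: goodstein n m is the n-th term G(n,m) (n \<ge> 1);
G(1,m) = m, G(k+1,m) = bump (k+1) (G(k,m)) - 1. Once a term is 0 all later
values are 0 (truncated subtraction). The value at n = 0 is a junk value.\<close>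

fun goodstein :: "nat \<Rightarrow> nat \<Rightarrow> nat" where
  "goodstein 0 m = m"
| "goodstein (Suc 0) m = m"
| "goodstein (Suc (Suc k)) m = bump (Suc (Suc k)) (goodstein (Suc k) m) - 1"

end

theory Submission
  imports Defs
begin

lemma bump_0: "bump b 0 = 0"
  by (subst bump.simps) simp

lemma bump_small:
  assumes "x < b"
  shows "bump b x = x"
proof (cases "b < 2")
  case True then show ?thesis by (subst bump.simps) simp
next
  case False
  show ?thesis
  proof (cases x)
    case 0 then show ?thesis by (simp add: bump_0)
  next
    case (Suc y)
    have "(\<Sum>i<x. (x div b ^ i mod b) * (b + 1) ^ bump b i)
        = (\<Sum>i\<in>{0}. (x div b ^ i mod b) * (b + 1) ^ bump b i)"
    proof (rule sum.mono_neutral_right)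
      show "\<forall>i\<in>{..<x} - {0}. x div b ^ i mod b * (b + 1) ^ bump b i = 0"
      proof
        fix i assume "i \<in> {..<x} - {0}"
        then have "i \<ge> 1" by auto
        then have "b \<le> b ^ i" using False
          by (metis One_nat_def less_one not_less power_increasing power_one_right zero_le_one le_trans le0 linorder_not_le)
        then have "x div b ^ i = 0" using assms by simp
        then show "x div b ^ i mod b * (b + 1) ^ bump b i = 0" by simp
      qed
    qed (use Suc in auto)
    then show ?thesis using False assms by (subst bump.simps) (simp add: bump_0)
  qed
qed

lemma zero_stays:
  assumes "goodstein n m = 0" "n \<ge> 1"
  shows "goodstein (n + j) m = 0"
proof (induction j)
  case 0 then show ?case using assms by simp
next
  case (Suc j)
  obtain k where k: "n + j = Suc k" using assms(2) by (cases "n + j") auto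
  have "n + Suc j = Suc (Suc k)" using k by simp
  then show ?case using Suc k by (simp add: bump_0)
qed

lemma dec_step:
  assumes "\<forall>n\<ge>1. goodstein n m \<le> B" "B < Suc (Suc k)"
  shows "goodstein (Suc (Suc k)) m = goodstein (Suc k) m - 1"
proof -
  have "goodstein (Suc k) m < Suc (Suc k)" proof -
    have "goodstein (Suc k) m \<le> B" using assms(1) by simp
    then show ?thesis using assms(2) by simp
  qed
  then show ?thesis by (simp add: bump_small)
qed

lemma dec_many:
  assumes "\<forall>n\<ge>1. goodstein n m \<le> B"
  shows "goodstein (Suc B + j) m = goodstein (Suc B) m - j"
proof (induction j)
  case 0 then show ?case by simp
next
  case (Suc j)
  have "goodstein (Suc B + Suc j) m = goodstein (Suc (Suc (B + j))) m" by simp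
  also have "\<dots> = goodstein (Suc (B + j)) m - 1"
    by (rule dec_step[OF assms]) simp
  also have "\<dots> = goodstein (Suc B) m - Suc j" using Suc by simp
  finally show ?case .
qed

theorem mainTheorem2:
  fixes m :: nat
  shows "(\<exists>n\<ge>1. goodstein n m = 0) \<longleftrightarrow> (\<exists>B::nat. \<forall>n\<ge>1. goodstein n m \<le> B)"
proof
  assume "\<exists>n\<ge>1. goodstein n m = 0"
  then obtain n where n: "n \<ge> 1" "goodstein n m = 0" by blast
  define B where "B = Max ((\<lambda>i. goodstein i m) ` {..n})"
  have "goodstein i m \<le> B" for i
  proof (cases "i \<le> n")
    case True then show ?thesis unfolding B_def by (intro Max_ge) auto
  next
    case False
    then obtain j where "i = n + j" by (metis le_add_diff_inverse nat_le_linear)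
    then show ?thesis using zero_stays[OF n(2) n(1)] by simp
  qed
  then show "\<exists>B::nat. \<forall>n\<ge>1. goodstein n m \<le> B" by blast
next
  assume "\<exists>B::nat. \<forall>n\<ge>1. goodstein n m \<le> B"
  then obtain B where B: "\<forall>n\<ge>1. goodstein n m \<le> B" by blast
  have "goodstein (Suc B + B) m = goodstein (Suc B) m - B" by (rule dec_many[OF B])
  also have "\<dots> = 0" using B by simp
  finally show "\<exists>n\<ge>1. goodstein n m = 0" by (intro exI[of _ "Suc B + B"]) simp
qed

end
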